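(* Assume (A.1)–(A.4). Let $\widehat\mu^N_\ast(\gamma)\in\arg\sup_{\widehat\mu^N\in\mathcal P^N}E_\gamma(\widehat\mu^N)$ and $\widehat\mu^N_\ast(\gamma,\varepsilon)\in\arg\sup_{\widehat\mu^N\in\mathcal P^N_\varepsilon}E_\gamma(\widehat\mu^N)$, where $\mathcal P^N_\varepsilon=\{\widehat\mu^N:W_{2,\varepsilon}(\widehat\mu^N,\widehat\mu_0^N)\le R\}$. Then for every $\varepsilon>0$, $$\big|E_0(\widehat\mu^N_\ast(\gamma))-E_0(\widehat\mu^N_\ast(\gamma,\varepsilon))\big|\le c\,e^{-2/\varepsilon}+\frac2\gamma,$$ where $c>0$ is a constant independent of $\varepsilon$.
   Context: $P_{x,y}$ is a distribution on $\mathcal X\times\{-1,+1\}$; $K_\mu(x,\hat x)=\int_0^\infty e^{-\xi\|x-\hat x\|_2^2}\mu(d\xi)$; $E_0(\mu)=\mathbb E[y\hat yK_\mu(x,\hat x)]$, $E_\gamma(\mu)=E_0(\mu)-\frac1\gamma\mathbb E[K_\mu^2(x,\hat x)]$. $\Xi=[\xi_l,\xi_u]$ (A.3); $\widehat\mu_0^N=\frac1N\sum_k\delta_{\xi_0^k}$ with $\xi_0^k$ i.i.d. from $\mu_0$ having a Lebesgue density (A.4). $\mathcal P^N=\{\widehat\mu^N=\frac1N\sum_{k=1}^N\delta_{\xi^k},\ \xi^k\in\Xi:W_2(\widehat\mu^N,\widehat\mu_0^N)\le R\}$. Sinkhorn divergence: for $\widehat\mu^N=\frac1N\sum\delta_{\xi^i}$,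 $\widehat\nu^N=\frac1N\sum\delta_{\zeta^j}$, $W^2_{2,\varepsilon}(\widehat\mu^N,\widehat\nu^N)=\sum_{i,j}\pi^\ast_{ij}|\xi^i-\zeta^j|^2$, $\pi^\ast=\arg\min\{\sum\pi_{ij}|\xi^i-\zeta^j|^2+\varepsilon\sum\pi_{ij}\log\pi_{ij}:\sum_i\pi_{ij}=\sum_j\pi_{ij}=\frac1N\}$. (A.1) $\mathcal X$ has finite diameter; (A.2) Slater: there exist empirical measures with $W_2(\cdot,\widehat\mu_0^N)<R$ and $W_{2,\varepsilon}(\cdot,\widehat\mu_0^N)<R$. *)

theory Defs
  imports "HOL-Probability.Probability"
begin

text \<open>Empirical measures with N atoms are represented by their atom vectors
  xi :: nat => real (only the entries xi k, k < N, matter).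
  The uniform empirical measure is (1/N) * sum of Dirac masses at xi k.\<close>

definition couplings :: "nat \<Rightarrow> (nat \<Rightarrow> nat \<Rightarrow> real) set" where
  "couplings N = {\<pi>. (\<forall>i j. i < N \<and> j < N \<longrightarrow> 0 \<le> \<pi> i j)
      \<and> (\<forall>i j. \<not> (i < N \<and> j < N) \<longrightarrow> \<pi> i j = 0)
      \<and> (\<forall>j<N. (\<Sum>i<N. \<pi> i j) = 1 / real N)
      \<and> (\<forall>i<N. (\<Sum>j<N. \<pi> i j) = 1 / real N)}"

definition transport_cost :: "nat \<Rightarrow> (nat \<Rightarrow> real) \<Rightarrow> (nat \<Rightarrow> real) \<Rightarrow> (nat \<Rightarrow> nat \<Rightarrow> real) \<Rightarrow> real" where
  "transport_cost N \<xi> \<zeta> \<pi> = (\<Sum>i<N. \<Sum>j<N. \<pi> i j * (\<xi> i - \<zeta> j)^2)"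

definition W2 :: "nat \<Rightarrow> (nat \<Rightarrow> real) \<Rightarrow> (nat \<Rightarrow> real) \<Rightarrow> real" where
  "W2 N \<xi> \<zeta> = sqrt (Inf (transport_cost N \<xi> \<zeta> ` couplings N))"

text \<open>Entropically regularised objective (with 0 * ln 0 = 0) and its minimiser.\<close>
definition sinkhorn_obj :: "nat \<Rightarrow> real \<Rightarrow> (nat \<Rightarrow> real) \<Rightarrow> (nat \<Rightarrow> real) \<Rightarrow> (nat \<Rightarrow> nat \<Rightarrow> real) \<Rightarrow> real" where
  "sinkhorn_obj N \<epsilon> \<xi> \<zeta> \<pi> =
     transport_cost N \<xi> \<zeta> \<pi> + \<epsilon> * (\<Sum>i<N. \<Sum>j<N. \<pi> i j * ln (\<pi> i j))"

definition sinkhorn_plan :: "nat \<Rightarrow> real \<Rightarrow> (nat \<Rightarrow> real) \<Rightarrow> (nat \<Rightarrow> real) \<Rightarrow> (nat \<Rightarrow> nat \<Rightarrow> real)" where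
  "sinkhorn_plan N \<epsilon> \<xi> \<zeta> = (THE \<pi>. \<pi> \<in> couplings N \<and>
      (\<forall>\<pi>'\<in>couplings N. sinkhorn_obj N \<epsilon> \<xi> \<zeta> \<pi> \<le> sinkhorn_obj N \<epsilon> \<xi> \<zeta> \<pi>'))"

definition W2eps :: "nat \<Rightarrow> real \<Rightarrow> (nat \<Rightarrow> real) \<Rightarrow> (nat \<Rightarrow> real) \<Rightarrow> real" where
  "W2eps N \<epsilon> \<xi> \<zeta> = sqrt (transport_cost N \<xi> \<zeta> (sinkhorn_plan N \<epsilon> \<xi> \<zeta>))"

definition Kemp :: "nat \<Rightarrow> (nat \<Rightarrow> real) \<Rightarrow> 'a::real_normed_vector \<Rightarrow> 'a \<Rightarrow> real" where
  "Kemp N \<xi> x x' = (\<Sum>k<N. exp (- \<xi> k * (norm (x - x'))^2)) / real N"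

definition E0 :: "('a::euclidean_space \<times> real) measure \<Rightarrow> nat \<Rightarrow> (nat \<Rightarrow> real) \<Rightarrow> real" where
  "E0 P N \<xi> = (\<integral>pq. snd (fst pq) * snd (snd pq) * Kemp N \<xi> (fst (fst pq)) (fst (snd pq)) \<partial>(P \<Otimes>\<^sub>M P))"

definition Egamma :: "('a::euclidean_space \<times> real) measure \<Rightarrow> nat \<Rightarrow> real \<Rightarrow> (nat \<Rightarrow> real) \<Rightarrow> real" where
  "Egamma P N \<gamma> \<xi> = E0 P N \<xi>
     - (1 / \<gamma>) * (\<integral>pq. (Kemp N \<xi> (fst (fst pq)) (fst (snd pq)))^2 \<partial>(P \<Otimes>\<^sub>M P))"

definition PN :: "nat \<Rightarrow> real \<Rightarrow> real \<Rightarrow> real \<Rightarrow> (nat \<Rightarrow> real) \<Rightarrow> (nat \<Rightarrow> real) set" where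
  "PN N xil xiu R \<xi>0 = {\<xi>. (\<forall>k<N. \<xi> k \<in> {xil..xiu}) \<and> W2 N \<xi> \<xi>0 \<le> R}"

definition PNeps :: "nat \<Rightarrow> real \<Rightarrow> real \<Rightarrow> real \<Rightarrow> real \<Rightarrow> (nat \<Rightarrow> real) \<Rightarrow> (nat \<Rightarrow> real) set" where
  "PNeps N \<epsilon> xil xiu R \<xi>0 = {\<xi>. (\<forall>k<N. \<xi> k \<in> {xil..xiu}) \<and> W2eps N \<epsilon> \<xi> \<xi>0 \<le> R}"

definition is_argmax_on :: "((nat \<Rightarrow> real) \<Rightarrow> real) \<Rightarrow> (nat \<Rightarrow> real) set \<Rightarrow> (nat \<Rightarrow> real) \<Rightarrow> bool" where
  "is_argmax_on f S \<xi> \<longleftrightarrow> \<xi> \<in> S \<and> (\<forall>\<xi>'\<in>S. f \<xi>' \<le> f \<xi>)"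

end

theory Submission
  imports Defs "HOL-Combinatorics.Permutations" "HOL-Real_Asymp.Real_Asymp"
begin


lemma perm_bound_aux:
  fixes \<pi> :: "nat \<Rightarrow> nat \<Rightarrow> real" and \<xi> \<zeta> :: "nat \<Rightarrow> real"
  assumes "card I = n" "finite I" "finite J" "card J = n"
    "\<And>i j. i \<in> I \<Longrightarrow> j \<in> J \<Longrightarrow> 0 \<le> \<pi> i j"
    "\<And>i. i \<in> I \<Longrightarrow> (\<Sum>j\<in>J. \<pi> i j) = w"
    "\<And>j. j \<in> J \<Longrightarrow> (\<Sum>i\<in>I. \<pi> i j) = w"
  shows "\<exists>\<sigma>. bij_betw \<sigma> I J \<and> (\<Sum>i\<in>I. \<Sum>j\<in>J. \<pi> i j * (\<xi> i * \<zeta> j)) \<le> w * (\<Sum>i\<in>I. \<xi> i * \<zeta> (\<sigma> i))"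
  using assms
proof (induction n arbitrary: I J \<pi>)
  case 0
  then have "I = {}" "J = {}" by auto
  then show ?case by (auto simp: bij_betw_def)
next
  case (Suc n)
  have neI: "I \<noteq> {}" and neJ: "J \<noteq> {}" using Suc.prems by auto
  obtain i0 where i0: "i0 \<in> I" "\<xi> i0 = Max (\<xi> ` I)"
    using Max_in[of "\<xi> ` I"] neI Suc.prems(2) by (metis (no_types, lifting) finite_imageI image_iff image_is_empty)
  obtain j0 where j0: "j0 \<in> J" "\<zeta> j0 = Max (\<zeta> ` J)"
    using Max_in[of "\<zeta> ` J"] neJ Suc.prems(3) by (metis (no_types, lifting) finite_imageI image_iff image_is_empty)
  have ximax: "\<xi> i \<le> \<xi> i0" if "i \<in> I" for i using i0 that Suc.prems(2) by simp
  have zetamax: "\<zeta> j \<le> \<zeta> j0" if "j \<in> J" for j using j0 that Suc.prems(3) by simp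
  define I' where "I' = I - {i0}"
  define J' where "J' = J - {j0}"
  define a where "a = w - \<pi> i0 j0"
  define u where "u i = \<pi> i j0" for i
  define v where "v j = \<pi> i0 j" for j
  define \<pi>' where "\<pi>' i j = \<pi> i j + u i * v j / a" for i j
  have fI': "finite I'" and fJ': "finite J'" using Suc.prems I'_def J'_def by auto
  have cI': "card I' = n" using Suc.prems(1,2) i0 I'_def by simp
  have cJ': "card J' = n" using Suc.prems(3,4) j0 J'_def by simp
  have sumI: "(\<Sum>i\<in>I. f i) = f i0 + (\<Sum>i\<in>I'. f i)" for f :: "nat \<Rightarrow> real"
    using Suc.prems(2) i0 I'_def by (simp add: sum.remove)
  have sumJ: "(\<Sum>j\<in>J. f j) = f j0 + (\<Sum>j\<in>J'. f j)" for f :: "nat \<Rightarrow> real"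
    using Suc.prems(3) j0 J'_def by (simp add: sum.remove)
  have su: "(\<Sum>i\<in>I'. u i) = a"
    using Suc.prems(7)[OF j0(1)] sumI[of "\<lambda>i. \<pi> i j0"] by (simp add: u_def a_def)
  have sv: "(\<Sum>j\<in>J'. v j) = a"
    using Suc.prems(6)[OF i0(1)] sumJ[of "\<lambda>j. \<pi> i0 j"] by (simp add: v_def a_def)
  have u0: "0 \<le> u i" if "i \<in> I'" for i using that Suc.prems(5) j0 I'_def u_def by auto
  have v0: "0 \<le> v j" if "j \<in> J'" for j using that Suc.prems(5) i0 J'_def v_def by auto
  have a0: "0 \<le> a" using su u0 by (metis sum_nonneg)
  have uz: "u i = 0" if "a = 0" "i \<in> I'" for i
    using su u0 that fI' by (metis sum_nonneg_eq_0_iff)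
  have vz: "v j = 0" if "a = 0" "j \<in> J'" for j
    using sv v0 that fJ' by (metis sum_nonneg_eq_0_iff)
  have p1: "0 \<le> \<pi>' i j" if "i \<in> I'" "j \<in> J'" for i j
    using that u0 v0 a0 Suc.prems(5) I'_def J'_def by (auto simp: \<pi>'_def)
  have p2: "(\<Sum>j\<in>J'. \<pi>' i j) = w" if "i \<in> I'" for i
  proof -
    have "(\<Sum>j\<in>J'. \<pi>' i j) = (\<Sum>j\<in>J'. \<pi> i j) + u i * (\<Sum>j\<in>J'. v j) / a"
      by (simp add: \<pi>'_def sum.distrib sum_distrib_left sum_divide_distrib)
    also have "(\<Sum>j\<in>J'. \<pi> i j) = w - u i"
      using Suc.prems(6)[of i] sumJ[of "\<pi> i"] that I'_def u_def by simp
    finally show ?thesis using sv uz[OF _ that] by (cases "a = 0") auto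
  qed
  have p3: "(\<Sum>i\<in>I'. \<pi>' i j) = w" if "j \<in> J'" for j
  proof -
    have "(\<Sum>i\<in>I'. \<pi>' i j) = (\<Sum>i\<in>I'. \<pi> i j) + (\<Sum>i\<in>I'. u i) * v j / a"
      by (simp add: \<pi>'_def sum.distrib sum_distrib_right sum_divide_distrib)
    also have "(\<Sum>i\<in>I'. \<pi> i j) = w - v j"
      using Suc.prems(7)[of j] sumI[of "\<lambda>i. \<pi> i j"] that J'_def v_def by simp
    finally show ?thesis using su vz[OF _ that] by (cases "a = 0") auto
  qed
  obtain \<sigma>' where \<sigma>': "bij_betw \<sigma>' I' J'"
    "(\<Sum>i\<in>I'. \<Sum>j\<in>J'. \<pi>' i j * (\<xi> i * \<zeta> j)) \<le> w * (\<Sum>i\<in>I'. \<xi> i * \<zeta> (\<sigma>' i))"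
    using Suc.IH[OF cI' fI' fJ' cJ' p1 p2 p3] by blast
  define \<sigma> where "\<sigma> = \<sigma>'(i0 := j0)"
  have "bij_betw \<sigma> I' J'" using \<sigma>'(1) I'_def unfolding \<sigma>_def
    by (metis (no_types, lifting) Diff_iff bij_betw_cong fun_upd_other singletonI)
  then have "bij_betw \<sigma> (I' \<union> {i0}) (J' \<union> {\<sigma> i0})"
    by (intro notIn_Un_bij_betw) (auto simp: I'_def J'_def \<sigma>_def)
  then have bij: "bij_betw \<sigma> I J" using i0 j0 I'_def J'_def \<sigma>_def by (simp add: insert_absorb)
  define A where "A = (\<Sum>i\<in>I'. u i * \<xi> i)"
  define B where "B = (\<Sum>j\<in>J'. v j * \<zeta> j)"
  have hA: "a * \<xi> i0 - A = (\<Sum>i\<in>I'. u i * (\<xi> i0 - \<xi> i))"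
    by (simp add: A_def su[symmetric] sum_distrib_right sum_distrib_left sum_subtractf algebra_simps)
  have hB: "a * \<zeta> j0 - B = (\<Sum>j\<in>J'. v j * (\<zeta> j0 - \<zeta> j))"
    by (simp add: B_def sv[symmetric] sum_distrib_right sum_distrib_left sum_subtractf algebra_simps)
  have A0: "0 \<le> a * \<xi> i0 - A" unfolding hA
    using u0 ximax I'_def by (intro sum_nonneg mult_nonneg_nonneg) auto
  have B0: "0 \<le> a * \<zeta> j0 - B" unfolding hB
    using v0 zetamax J'_def by (intro sum_nonneg mult_nonneg_nonneg) auto
  have key: "\<xi> i0 * B + \<zeta> j0 * A \<le> a * (\<xi> i0 * \<zeta> j0) + A * B / a"
  proof (cases "a = 0")
    case True
    then have "A = 0" "B = 0" using uz vz by (auto simp: A_def B_def)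
    then show ?thesis using True by simp
  next
    case False
    then have ap: "a > 0" using a0 by simp
    have "0 \<le> (a * \<xi> i0 - A) * (a * \<zeta> j0 - B)" using A0 B0 by simp
    then have "a * (\<xi> i0 * B + \<zeta> j0 * A) \<le> a * (a * (\<xi> i0 * \<zeta> j0) + A * B / a)"
      using ap by (simp add: algebra_simps)
    then show ?thesis using ap by simp
  qed
  have AB: "(\<Sum>i\<in>I'. \<Sum>j\<in>J'. u i * v j / a * (\<xi> i * \<zeta> j)) = A * B / a"
    by (simp add: A_def B_def sum_product sum_divide_distrib algebra_simps)
  have T: "(\<Sum>i\<in>I. \<Sum>j\<in>J. \<pi> i j * (\<xi> i * \<zeta> j))
     = \<pi> i0 j0 * (\<xi> i0 * \<zeta> j0) + \<xi> i0 * B + \<zeta> j0 * A + (\<Sum>i\<in>I'. \<Sum>j\<in>J'. \<pi> i j * (\<xi> i * \<zeta> j))"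
    by (simp add: sumI sumJ sum.distrib A_def B_def u_def v_def sum_distrib_left sum_distrib_right algebra_simps)
  have T': "(\<Sum>i\<in>I'. \<Sum>j\<in>J'. \<pi>' i j * (\<xi> i * \<zeta> j))
     = (\<Sum>i\<in>I'. \<Sum>j\<in>J'. \<pi> i j * (\<xi> i * \<zeta> j)) + A * B / a"
    unfolding AB[symmetric] by (simp add: \<pi>'_def sum.distrib algebra_simps)
  have R: "w * (\<Sum>i\<in>I. \<xi> i * \<zeta> (\<sigma> i)) = w * (\<xi> i0 * \<zeta> j0) + w * (\<Sum>i\<in>I'. \<xi> i * \<zeta> (\<sigma>' i))"
  proof -
    have "(\<Sum>i\<in>I'. \<xi> i * \<zeta> (\<sigma> i)) = (\<Sum>i\<in>I'. \<xi> i * \<zeta> (\<sigma>' i))"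
      by (rule sum.cong) (auto simp: \<sigma>_def I'_def)
    then show ?thesis by (simp add: sumI \<sigma>_def algebra_simps)
  qed
  have "(\<Sum>i\<in>I. \<Sum>j\<in>J. \<pi> i j * (\<xi> i * \<zeta> j)) \<le> w * (\<Sum>i\<in>I. \<xi> i * \<zeta> (\<sigma> i))"
    unfolding T R using key \<sigma>'(2) T' by (simp add: a_def algebra_simps)
  then show ?case using bij by blast
qed




definition pc :: "nat \<Rightarrow> (nat \<Rightarrow> nat) \<Rightarrow> nat \<Rightarrow> nat \<Rightarrow> real" where
  "pc N p i j = (if i < N \<and> j < N \<and> j = p i then 1 / real N else 0)"

lemma pc_coupling:
  assumes "p permutes {..<N}"
  shows "pc N p \<in> couplings N"
proof -
  have pin: "p i < N" if "i < N" for i using permutes_in_image[OF assms, of i] that by simp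
  have r: "(\<Sum>j<N. pc N p i j) = 1 / real N" if "i < N" for i
  proof -
    have pi: "p i \<in> {..<N}" using pin[OF that] by simp
    have zero: "pc N p i j = 0" if "j \<in> {..<N} - {p i}" for j
      using that unfolding pc_def by auto
    have "(\<Sum>j<N. pc N p i j) = pc N p i (p i) + (\<Sum>j\<in>{..<N} - {p i}. pc N p i j)"
      using pi by (simp add: sum.remove)
    also have "(\<Sum>j\<in>{..<N} - {p i}. pc N p i j) = 0" using zero by (intro sum.neutral) blast
    also have "pc N p i (p i) = 1 / real N" using that pin[OF that] unfolding pc_def by simp
    finally show ?thesis by simp
  qed
  have c: "(\<Sum>i<N. pc N p i j) = 1 / real N" if "j < N" for j
  proof -
    define i where "i = inv p j"
    have i1: "i < N" using permutes_in_image[OF permutes_inv[OF assms], of j] that unfolding i_def by simp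
    have i2: "p i = j" unfolding i_def by (rule permutes_inverses(1)[OF assms])
    have u: "k = i" if "p k = j" for k
      using injD[OF permutes_inj[OF assms], of k i] i2 that by simp
    have zero: "pc N p k j = 0" if "k \<in> {..<N} - {i}" for k
    proof -
      have "p k \<noteq> j" using u that by blast
      then show ?thesis unfolding pc_def by auto
    qed
    have "(\<Sum>k<N. pc N p k j) = pc N p i j + (\<Sum>k\<in>{..<N} - {i}. pc N p k j)"
      using i1 by (simp add: sum.remove)
    also have "(\<Sum>k\<in>{..<N} - {i}. pc N p k j) = 0" using zero by (intro sum.neutral) blast
    also have "pc N p i j = 1 / real N" using i1 i2 that unfolding pc_def by simp
    finally show ?thesis by simp
  qed
  have n: "0 \<le> pc N p i j" for i j by (simp add: pc_def)
  have z: "pc N p i j = 0" if "\<not> (i < N \<and> j < N)" for i j using that unfolding pc_def by auto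
  show ?thesis unfolding couplings_def
  proof (intro CollectI conjI allI impI)
    fix i j assume "i < N \<and> j < N" then show "0 \<le> pc N p i j" using n[of i j] by simp
  next
    fix i j assume "\<not> (i < N \<and> j < N)" then show "pc N p i j = 0" by (rule z)
  next
    fix j :: nat assume "j < N" then show "(\<Sum>i<N. pc N p i j) = 1 / real N" by (rule c)
  next
    fix i :: nat assume "i < N" then show "(\<Sum>j<N. pc N p i j) = 1 / real N" by (rule r)
  qed
qed

lemma pc_cost:
  assumes "p permutes {..<N}"
  shows "transport_cost N \<xi> \<zeta> (pc N p) = (\<Sum>i<N. (\<xi> i - \<zeta> (p i))^2) / real N"
proof -
  have pin: "p i < N" if "i < N" for i using permutes_in_image[OF assms, of i] that by simp
  have "(\<Sum>j<N. pc N p i j * (\<xi> i - \<zeta> j)^2) = (\<xi> i - \<zeta> (p i))^2 / real N" if "i < N" for i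
  proof -
    have "(\<Sum>j<N. pc N p i j * (\<xi> i - \<zeta> j)^2) = (\<Sum>j\<in>{p i}. pc N p i j * (\<xi> i - \<zeta> j)^2)"
      using that pin[OF that] by (intro sum.mono_neutral_cong_right) (auto simp: pc_def)
    then show ?thesis using that pin[OF that] by (simp add: pc_def)
  qed
  then show ?thesis unfolding transport_cost_def by (simp add: sum_divide_distrib)
qed

lemma cost_nonneg: "\<pi> \<in> couplings N \<Longrightarrow> 0 \<le> transport_cost N \<xi> \<zeta> \<pi>"
  unfolding transport_cost_def couplings_def by (auto intro!: sum_nonneg)

lemma couplings_ne: "couplings N \<noteq> {}"
  using pc_coupling[of id N] by (auto simp: permutes_id)

lemma sum_pi_left:
  assumes "\<pi> \<in> couplings N"
  shows "(\<Sum>i<N. \<Sum>j<N. \<pi> i j * f i) = (\<Sum>i<N. f i) / real N"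
proof -
  have "(\<Sum>i<N. \<Sum>j<N. \<pi> i j * f i) = (\<Sum>i<N. f i * (\<Sum>j<N. \<pi> i j))"
    by (simp add: sum_distrib_left mult.commute)
  also have "\<dots> = (\<Sum>i<N. f i / real N)" using assms by (auto simp: couplings_def intro!: sum.cong)
  finally show ?thesis by (simp add: sum_divide_distrib)
qed

lemma sum_pi_right:
  assumes "\<pi> \<in> couplings N"
  shows "(\<Sum>i<N. \<Sum>j<N. \<pi> i j * f j) = (\<Sum>j<N. f j) / real N"
proof -
  have "(\<Sum>i<N. \<Sum>j<N. \<pi> i j * f j) = (\<Sum>j<N. f j * (\<Sum>i<N. \<pi> i j))"
    by (subst sum.swap) (simp add: sum_distrib_left mult.commute)
  also have "\<dots> = (\<Sum>j<N. f j / real N)" using assms by (auto simp: couplings_def intro!: sum.cong)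
  finally show ?thesis by (simp add: sum_divide_distrib)
qed

lemma perm_cost:
  assumes "\<pi> \<in> couplings N"
  shows "\<exists>p. p permutes {..<N} \<and> (\<Sum>i<N. (\<xi> i - \<zeta> (p i))^2) / real N \<le> transport_cost N \<xi> \<zeta> \<pi>"
proof -
  obtain \<sigma> where \<sigma>: "bij_betw \<sigma> {..<N} {..<N}"
    "(\<Sum>i<N. \<Sum>j<N. \<pi> i j * (\<xi> i * \<zeta> j)) \<le> 1 / real N * (\<Sum>i<N. \<xi> i * \<zeta> (\<sigma> i))"
    using perm_bound_aux[of "{..<N}" N "{..<N}" \<pi> "1 / real N" \<xi> \<zeta>] assms
    by (auto simp: couplings_def)
  define p where "p i = (if i < N then \<sigma> i else i)" for i
  have bp: "bij_betw p {..<N} {..<N}" using \<sigma>(1) by (rule bij_betw_cong[THEN iffD1, rotated]) (auto simp: p_def)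
  have pp: "p permutes {..<N}" using bp by (rule bij_imp_permutes) (auto simp: p_def)
  have e1: "(\<Sum>i<N. (\<zeta> (p i))^2) = (\<Sum>j<N. (\<zeta> j)^2)"
    using sum.reindex_bij_betw[OF bp, of "\<lambda>j. (\<zeta> j)^2"] by simp
  have e2: "(\<Sum>i<N. \<xi> i * \<zeta> (p i)) = (\<Sum>i<N. \<xi> i * \<zeta> (\<sigma> i))" by (auto simp: p_def intro!: sum.cong)
  have "transport_cost N \<xi> \<zeta> \<pi> = (\<Sum>i<N. \<Sum>j<N. \<pi> i j * (\<xi> i)^2 + \<pi> i j * (\<zeta> j)^2
      - 2 * (\<pi> i j * (\<xi> i * \<zeta> j)))"
    unfolding transport_cost_def by (intro sum.cong refl) (simp add: power2_diff algebra_simps)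
  also have "\<dots> = (\<Sum>i<N. \<Sum>j<N. \<pi> i j * (\<xi> i)^2) + (\<Sum>i<N. \<Sum>j<N. \<pi> i j * (\<zeta> j)^2)
      - 2 * (\<Sum>i<N. \<Sum>j<N. \<pi> i j * (\<xi> i * \<zeta> j))"
    by (simp only: sum_subtractf sum.distrib sum_distrib_left)
  also have "\<dots> = (\<Sum>i<N. (\<xi> i)^2) / real N + (\<Sum>j<N. (\<zeta> j)^2) / real N
      - 2 * (\<Sum>i<N. \<Sum>j<N. \<pi> i j * (\<xi> i * \<zeta> j))"
    using sum_pi_left[OF assms, of "\<lambda>i. (\<xi> i)^2"] sum_pi_right[OF assms, of "\<lambda>j. (\<zeta> j)^2"] by simp
  also have "\<dots> \<ge> (\<Sum>i<N. (\<xi> i)^2) / real N + (\<Sum>i<N. (\<zeta> (p i))^2) / real N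
      - 2 * (1 / real N * (\<Sum>i<N. \<xi> i * \<zeta> (p i)))"
    using \<sigma>(2) e1 e2 by simp
  also have "(\<Sum>i<N. (\<xi> i)^2) / real N + (\<Sum>i<N. (\<zeta> (p i))^2) / real N
      - 2 * (1 / real N * (\<Sum>i<N. \<xi> i * \<zeta> (p i))) = (\<Sum>i<N. (\<xi> i - \<zeta> (p i))^2) / real N"
  proof -
    have "(\<Sum>i<N. (\<xi> i - \<zeta> (p i))^2) = (\<Sum>i<N. (\<xi> i)^2 + (\<zeta> (p i))^2 - 2 * (\<xi> i * \<zeta> (p i)))"
      by (intro sum.cong refl) (simp add: power2_diff algebra_simps)
    also have "\<dots> = (\<Sum>i<N. (\<xi> i)^2) + (\<Sum>i<N. (\<zeta> (p i))^2) - 2 * (\<Sum>i<N. \<xi> i * \<zeta> (p i))"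
      by (simp only: sum_subtractf sum.distrib sum_distrib_left)
    finally have X: "(\<Sum>i<N. (\<xi> i - \<zeta> (p i))^2) = (\<Sum>i<N. (\<xi> i)^2) + (\<Sum>i<N. (\<zeta> (p i))^2) - 2 * (\<Sum>i<N. \<xi> i * \<zeta> (p i))" .
    show ?thesis unfolding X by (simp add: diff_divide_distrib add_divide_distrib)
  qed
  finally show ?thesis using pp by blast
qed

lemma bdd_cost: "bdd_below (transport_cost N \<xi> \<zeta> ` couplings N)"
  using cost_nonneg by (intro bdd_belowI[where m=0]) auto

lemma Inf_nonneg: "0 \<le> Inf (transport_cost N \<xi> \<zeta> ` couplings N)"
  using couplings_ne cost_nonneg by (intro cInf_greatest) auto

lemma W2_le_cost: "\<pi> \<in> couplings N \<Longrightarrow> W2 N \<xi> \<zeta> \<le> sqrt (transport_cost N \<xi> \<zeta> \<pi>)"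
  unfolding W2_def using bdd_cost by (intro real_sqrt_le_mono cInf_lower) auto

lemma W2_perm:
  assumes "W2 N \<xi> \<zeta> \<le> R"
  shows "\<exists>p. p permutes {..<N} \<and> (\<Sum>i<N. (\<xi> i - \<zeta> (p i))^2) / real N \<le> R^2"
proof -
  define F where "F = {p. p permutes {..<N}}"
  define g where "g p = (\<Sum>i<N. (\<xi> i - \<zeta> (p i))^2) / real N" for p
  have fF: "finite F" unfolding F_def by (rule finite_permutations) simp
  have neF: "F \<noteq> {}" unfolding F_def using permutes_id by blast
  define m where "m = Min (g ` F)"
  have "m \<in> g ` F" unfolding m_def using fF neF by simp
  then obtain p where p: "p \<in> F" "g p = m" by auto
  have "m \<le> Inf (transport_cost N \<xi> \<zeta> ` couplings N)"
  proof (rule cInf_greatest)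
    show "transport_cost N \<xi> \<zeta> ` couplings N \<noteq> {}" using couplings_ne by simp
    fix c assume "c \<in> transport_cost N \<xi> \<zeta> ` couplings N"
    then obtain \<pi> where "\<pi> \<in> couplings N" "c = transport_cost N \<xi> \<zeta> \<pi>" by auto
    then obtain q where "q permutes {..<N}" "g q \<le> c" using perm_cost unfolding g_def by blast
    have "m \<le> g q" unfolding m_def using fF \<open>q permutes {..<N}\<close> by (intro Min_le) (auto simp: F_def)
    then show "m \<le> c" using \<open>g q \<le> c\<close> by simp
  qed
  moreover have "Inf (transport_cost N \<xi> \<zeta> ` couplings N) \<le> R^2"
  proof -
    have "0 \<le> sqrt (Inf (transport_cost N \<xi> \<zeta> ` couplings N))" using Inf_nonneg[of N \<xi> \<zeta>] by simp
    then have "(sqrt (Inf (transport_cost N \<xi> \<zeta> ` couplings N)))^2 \<le> R^2"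
      using assms unfolding W2_def by (intro power_mono) auto
    then show ?thesis using Inf_nonneg[of N \<xi> \<zeta>] by simp
  qed
  ultimately show ?thesis using p unfolding F_def g_def by auto
qed

lemma W2_lt:
  assumes "W2 N \<xi> \<zeta> < R"
  shows "\<exists>\<pi>\<in>couplings N. transport_cost N \<xi> \<zeta> \<pi> < R^2"
proof -
  have "(sqrt (Inf (transport_cost N \<xi> \<zeta> ` couplings N)))^2 < R^2"
    using assms Inf_nonneg[of N \<xi> \<zeta>] unfolding W2_def by (intro power_strict_mono) auto
  then have "Inf (transport_cost N \<xi> \<zeta> ` couplings N) < R^2" using Inf_nonneg[of N \<xi> \<zeta>] by simp
  then have "\<exists>c\<in>transport_cost N \<xi> \<zeta> ` couplings N. c < R^2"
    by (intro cInf_lessD) (use couplings_ne[of N] in auto)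
  then show ?thesis by auto
qed



lemma h_cont: "continuous_on {0..} (\<lambda>x::real. x * ln x)"
proof -
  have "continuous (at x within {0..}) (\<lambda>x::real. x * ln x)" if "x \<in> {0..}" for x
  proof (cases "x = 0")
    case True
    have "((\<lambda>x::real. x * ln x) \<longlongrightarrow> 0) (at_right 0)" by real_asymp
    then show ?thesis using True by (simp add: continuous_within at_within_Ici_at_right)
  next
    case False
    then have "x > 0" using that by simp
    then have "isCont (\<lambda>x::real. x * ln x) x" by (auto intro!: continuous_intros)
    then show ?thesis by (rule continuous_at_imp_continuous_at_within)
  qed
  then show ?thesis by (simp add: continuous_on_eq_continuous_within)
qed

lemma ln_strict:
  fixes y :: real
  assumes "0 < y" "y \<noteq> 1"
  shows "ln y < y - 1"
proof -
  have "ln y \<le> y - 1" by (rule ln_le_minus_one) (rule assms(1))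
  moreover have "ln y \<noteq> y - 1" using ln_eq_minus_one[of y] assms by blast
  ultimately show ?thesis by linarith
qed

lemma h_tangent_aux:
  fixes x m :: real
  assumes "0 \<le> x" "0 < m"
  shows "x * ln m + (x - m) \<le> x * ln x \<and> (x \<noteq> m \<longrightarrow> x * ln m + (x - m) < x * ln x)"
proof (cases "x = 0")
  case True then show ?thesis using assms by simp
next
  case False
  then have xp: "x > 0" using assms by simp
  have l: "x * ln (m / x) = x * ln m - x * ln x" using xp assms by (simp add: ln_divide_pos right_diff_distrib)
  have r: "x * (m / x - 1) = m - x" using xp by (simp add: field_simps)
  have "ln (m / x) \<le> m / x - 1" using xp assms by (intro ln_le_minus_one) simp
  then have "x * ln (m / x) \<le> x * (m / x - 1)" using xp by (intro mult_left_mono) auto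
  then have le: "x * ln m + (x - m) \<le> x * ln x" unfolding l r by linarith
  have lt: "x * ln m + (x - m) < x * ln x" if "x \<noteq> m"
  proof -
    have "m / x \<noteq> 1" using that xp by simp
    then have "ln (m / x) < m / x - 1" using xp assms by (intro ln_strict) simp_all
    then have "x * ln (m / x) < x * (m / x - 1)" using xp by (intro mult_strict_left_mono) auto
    then show ?thesis unfolding l r by linarith
  qed
  show ?thesis using le lt by blast
qed

lemma h_tangent:
  fixes x m :: real
  assumes "0 \<le> x" "0 < m"
  shows "x * ln m + (x - m) \<le> x * ln x" "x \<noteq> m \<Longrightarrow> x * ln m + (x - m) < x * ln x"
  using h_tangent_aux[OF assms] by blast+

lemma h_mid_aux:
  fixes a b :: real
  assumes "0 \<le> a" "0 \<le> b" "a \<noteq> b"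
  shows "(a + b) / 2 * ln ((a + b) / 2) < (a * ln a + b * ln b) / 2"
proof -
  define m where "m = (a + b) / 2"
  have ab: "a + b = 2 * m" by (simp add: m_def)
  have mp: "0 < m" using assms by (simp add: m_def)
  have am: "a \<noteq> m" using assms(3) ab by linarith
  have 1: "a * ln m + (a - m) < a * ln a" using h_tangent(2)[OF assms(1) mp am] .
  have 2: "b * ln m + (b - m) \<le> b * ln b" using h_tangent(1)[OF assms(2) mp] .
  have e: "(a * ln m + (a - m)) + (b * ln m + (b - m)) = 2 * (m * ln m)"
  proof -
    have "(a * ln m + (a - m)) + (b * ln m + (b - m)) = (a + b) * ln m + ((a + b) - 2 * m)"
      by (simp add: algebra_simps)
    then show ?thesis unfolding ab by simp
  qed
  have s: "(a * ln m + (a - m)) + (b * ln m + (b - m)) < a * ln a + b * ln b"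
    using 1 2 by (rule add_less_le_mono)
  have "2 * (m * ln m) < a * ln a + b * ln b" using s unfolding e .
  then have "(2 * (m * ln m)) / 2 < (a * ln a + b * ln b) / 2" by (intro divide_strict_right_mono) auto
  then have "m * ln m < (a * ln a + b * ln b) / 2" by simp
  then show ?thesis unfolding m_def .
qed

lemma h_mid:
  fixes a b :: real
  assumes "0 \<le> a" "0 \<le> b"
  shows "(a + b) / 2 * ln ((a + b) / 2) \<le> (a * ln a + b * ln b) / 2"
    "a \<noteq> b \<Longrightarrow> (a + b) / 2 * ln ((a + b) / 2) < (a * ln a + b * ln b) / 2"
proof -
  show "a \<noteq> b \<Longrightarrow> (a + b) / 2 * ln ((a + b) / 2) < (a * ln a + b * ln b) / 2"
    using h_mid_aux[OF assms] by blast
  show "(a + b) / 2 * ln ((a + b) / 2) \<le> (a * ln a + b * ln b) / 2"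
  proof (cases "a = b")
    case True
    then have "(a + b) / 2 = a" by simp
    then show ?thesis using True by simp
  next
    case False then show ?thesis using h_mid_aux[OF assms False] by simp
  qed
qed

lemma cont_ij: "continuous_on S (\<lambda>\<pi>::nat\<Rightarrow>nat\<Rightarrow>real. \<pi> i j)"
proof -
  have "continuous_on UNIV (\<lambda>\<pi>::nat\<Rightarrow>nat\<Rightarrow>real. \<pi> i)" by simp
  moreover have "continuous_on UNIV (\<lambda>f::nat\<Rightarrow>real. f j)" by simp
  ultimately have "continuous_on UNIV ((\<lambda>f::nat\<Rightarrow>real. f j) \<circ> (\<lambda>\<pi>::nat\<Rightarrow>nat\<Rightarrow>real. \<pi> i))"
    by (rule continuous_on_compose[OF _ continuous_on_subset]) auto
  then show ?thesis by (auto simp: o_def intro: continuous_on_subset)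
qed

lemma compact_box: "compact {\<pi>::nat\<Rightarrow>nat\<Rightarrow>real. \<forall>i j. \<pi> i j \<in> {0..1}}"
proof -
  have c1: "compact (PiE (UNIV::nat set) (\<lambda>j. {0..1::real}))"
  proof -
    have "compactin (product_topology (\<lambda>_. euclidean) (UNIV::nat set)) (PiE UNIV (\<lambda>j. {0..1::real}))"
      by (subst compactin_PiE) auto
    then show ?thesis by (metis compactin_euclidean_iff euclidean_product_topology)
  qed
  have "compactin (product_topology (\<lambda>_. euclidean) (UNIV::nat set))
     (PiE UNIV (\<lambda>i. PiE (UNIV::nat set) (\<lambda>j. {0..1::real})))"
    using c1 by (subst compactin_PiE) auto
  then have "compact (PiE (UNIV::nat set) (\<lambda>i. PiE (UNIV::nat set) (\<lambda>j. {0..1::real})))"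
    by (metis compactin_euclidean_iff euclidean_product_topology)
  moreover have "PiE (UNIV::nat set) (\<lambda>i. PiE (UNIV::nat set) (\<lambda>j. {0..1::real}))
      = {\<pi>::nat\<Rightarrow>nat\<Rightarrow>real. \<forall>i j. \<pi> i j \<in> {0..1}}"
    by (auto simp: PiE_def Pi_def)
  ultimately show ?thesis by simp
qed

lemma closed_couplings: "closed (couplings N)"
  unfolding couplings_def
  apply (intro closed_Collect_conj closed_Collect_all closed_Collect_imp)
  by (auto intro!: closed_Collect_le closed_Collect_eq continuous_on_sum cont_ij continuous_on_const)

lemma couplings_box: "couplings N \<subseteq> {\<pi>::nat\<Rightarrow>nat\<Rightarrow>real. \<forall>i j. \<pi> i j \<in> {0..1}}"
proof
  fix \<pi> assume p: "\<pi> \<in> couplings N"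
  have "\<pi> i j \<in> {0..1}" for i j
  proof (cases "i < N \<and> j < N")
    case True
    have "\<pi> i j \<le> (\<Sum>i'<N. \<pi> i' j)" using p True
      by (intro member_le_sum) (auto simp: couplings_def)
    also have "\<dots> = 1 / real N" using p True by (auto simp: couplings_def)
    also have "\<dots> \<le> 1" using True by (simp add: divide_le_eq_1)
    finally show ?thesis using p True by (auto simp: couplings_def)
  next
    case False then show ?thesis using p by (auto simp: couplings_def)
  qed
  then show "\<pi> \<in> {\<pi>. \<forall>i j. \<pi> i j \<in> {0..1}}" by auto
qed

lemma compact_couplings: "compact (couplings N)"
proof -
  have "compact ({\<pi>::nat\<Rightarrow>nat\<Rightarrow>real. \<forall>i j. \<pi> i j \<in> {0..1}} \<inter> couplings N)"
    using compact_box closed_couplings by (rule compact_Int_closed)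
  then show ?thesis using couplings_box by (simp add: Int_absorb1)
qed

lemma cont_obj: "continuous_on (couplings N) (sinkhorn_obj N \<epsilon> \<xi> \<zeta>)"
proof -
  have e: "continuous_on (couplings N) (\<lambda>\<pi>. \<pi> i j * ln (\<pi> i j))" if "i < N" "j < N" for i j
    using that by (intro continuous_on_compose2[OF h_cont cont_ij]) (auto simp: couplings_def)
  show ?thesis unfolding sinkhorn_obj_def transport_cost_def
    by (intro continuous_intros continuous_on_sum cont_ij e) auto
qed

lemma sinkhorn_plan_prop:
  assumes "0 < \<epsilon>"
  shows "sinkhorn_plan N \<epsilon> \<xi> \<zeta> \<in> couplings N \<and>
     (\<forall>\<pi>'\<in>couplings N. sinkhorn_obj N \<epsilon> \<xi> \<zeta> (sinkhorn_plan N \<epsilon> \<xi> \<zeta>) \<le> sinkhorn_obj N \<epsilon> \<xi> \<zeta> \<pi>')"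
proof -
  let ?C = "couplings N" and ?f = "sinkhorn_obj N \<epsilon> \<xi> \<zeta>"
  have ne: "?C \<noteq> {}"
  proof -
    have "(\<lambda>i j. if i < N \<and> j < N \<and> i = j then 1 / real N else 0) \<in> ?C"
    proof -
      have r: "(\<Sum>j<N. if i < N \<and> j < N \<and> i = j then 1 / real N else 0) = 1 / real N" if "i < N" for i
        using that by (simp add: sum.delta)
      have c: "(\<Sum>i<N. if i < N \<and> j < N \<and> i = j then 1 / real N else 0) = 1 / real N" if "j < N" for j
        using that by (simp add: sum.delta')
      show ?thesis using r c unfolding couplings_def by auto
    qed
    then show ?thesis by blast
  qed
  obtain \<pi>0 where \<pi>0: "\<pi>0 \<in> ?C" "\<forall>\<pi>'\<in>?C. ?f \<pi>0 \<le> ?f \<pi>'"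
    using continuous_attains_inf[OF compact_couplings ne cont_obj] by blast
  have uniq: "\<pi> = \<pi>0" if "\<pi> \<in> ?C" "\<forall>\<pi>'\<in>?C. ?f \<pi> \<le> ?f \<pi>'" for \<pi>
  proof (rule ccontr)
    assume ne: "\<pi> \<noteq> \<pi>0"
    then obtain i j where ij: "\<pi> i j \<noteq> \<pi>0 i j" by (meson ext)
    have ijN': "i < N \<and> j < N"
    proof (rule ccontr)
      assume c: "\<not> (i < N \<and> j < N)"
      have "\<pi> i j = 0" "\<pi>0 i j = 0" using c that(1) \<pi>0(1) unfolding couplings_def by blast+
      then show False using ij by simp
    qed
    then have ijN: "i < N" "j < N" by auto
    define m where "m i j = (\<pi> i j + \<pi>0 i j) / 2" for i j
    have mC: "m \<in> ?C" using that(1) \<pi>0(1)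
      unfolding couplings_def m_def by (auto simp: sum.distrib sum_divide_distrib[symmetric])
    have cm: "transport_cost N \<xi> \<zeta> m = (transport_cost N \<xi> \<zeta> \<pi> + transport_cost N \<xi> \<zeta> \<pi>0) / 2"
      unfolding transport_cost_def m_def
      by (simp add: sum.distrib sum_divide_distrib[symmetric] algebra_simps)
    have nn: "0 \<le> \<pi> a b" "0 \<le> \<pi>0 a b" if "a < N" "b < N" for a b
      using that \<open>\<pi> \<in> ?C\<close> \<pi>0(1) unfolding couplings_def by auto
    have em: "(\<Sum>a<N. \<Sum>b<N. m a b * ln (m a b))
       < (\<Sum>a<N. \<Sum>b<N. (\<pi> a b * ln (\<pi> a b) + \<pi>0 a b * ln (\<pi>0 a b)) / 2)"
    proof (rule sum_strict_mono_ex1)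
      show "\<forall>a\<in>{..<N}. (\<Sum>b<N. m a b * ln (m a b)) \<le> (\<Sum>b<N. (\<pi> a b * ln (\<pi> a b) + \<pi>0 a b * ln (\<pi>0 a b)) / 2)"
      proof (intro ballI sum_mono)
        fix a b assume "a \<in> {..<N}" "b \<in> {..<N}"
        then show "m a b * ln (m a b) \<le> (\<pi> a b * ln (\<pi> a b) + \<pi>0 a b * ln (\<pi>0 a b)) / 2"
          unfolding m_def using nn[of a b] by (intro h_mid(1)) auto
      qed
      show "\<exists>a\<in>{..<N}. (\<Sum>b<N. m a b * ln (m a b)) < (\<Sum>b<N. (\<pi> a b * ln (\<pi> a b) + \<pi>0 a b * ln (\<pi>0 a b)) / 2)"
      proof (rule bexI[of _ i], rule sum_strict_mono_ex1)
        show "\<forall>b\<in>{..<N}. m i b * ln (m i b) \<le> (\<pi> i b * ln (\<pi> i b) + \<pi>0 i b * ln (\<pi>0 i b)) / 2"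
        proof
          fix b assume "b \<in> {..<N}"
          then show "m i b * ln (m i b) \<le> (\<pi> i b * ln (\<pi> i b) + \<pi>0 i b * ln (\<pi>0 i b)) / 2"
            unfolding m_def using nn[of i b] ijN by (intro h_mid(1)) auto
        qed
        have "m i j * ln (m i j) < (\<pi> i j * ln (\<pi> i j) + \<pi>0 i j * ln (\<pi>0 i j)) / 2"
          unfolding m_def using nn[of i j] ijN ij by (intro h_mid(2)) auto
        then show "\<exists>b\<in>{..<N}. m i b * ln (m i b) < (\<pi> i b * ln (\<pi> i b) + \<pi>0 i b * ln (\<pi>0 i b)) / 2"
          using ijN by blast
      qed (use ijN in auto)
    qed simp
    have "?f m < (?f \<pi> + ?f \<pi>0) / 2"
    proof -
      define Hm where "Hm = (\<Sum>a<N. \<Sum>b<N. m a b * ln (m a b))"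
      define Hp where "Hp = (\<Sum>a<N. \<Sum>b<N. \<pi> a b * ln (\<pi> a b))"
      define Hq where "Hq = (\<Sum>a<N. \<Sum>b<N. \<pi>0 a b * ln (\<pi>0 a b))"
      have s2: "(\<Sum>a<N. \<Sum>b<N. (\<pi> a b * ln (\<pi> a b) + \<pi>0 a b * ln (\<pi>0 a b)) / 2) = (Hp + Hq) / 2"
        unfolding Hp_def Hq_def by (simp add: sum.distrib sum_divide_distrib[symmetric])
      have "Hm < (Hp + Hq) / 2" using em unfolding s2 Hm_def .
      then have "\<epsilon> * Hm < \<epsilon> * ((Hp + Hq) / 2)" using assms by (rule mult_strict_left_mono)
      moreover have "\<epsilon> * ((Hp + Hq) / 2) = (\<epsilon> * Hp + \<epsilon> * Hq) / 2" by (simp add: field_simps)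
      moreover have "?f m = transport_cost N \<xi> \<zeta> m + \<epsilon> * Hm" "?f \<pi> = transport_cost N \<xi> \<zeta> \<pi> + \<epsilon> * Hp"
        "?f \<pi>0 = transport_cost N \<xi> \<zeta> \<pi>0 + \<epsilon> * Hq"
        unfolding sinkhorn_obj_def Hm_def Hp_def Hq_def by simp_all
      ultimately have h: "\<epsilon> * Hm < \<epsilon> * ((Hp + Hq) / 2)" "\<epsilon> * ((Hp + Hq) / 2) = (\<epsilon> * Hp + \<epsilon> * Hq) / 2"
        "?f m = transport_cost N \<xi> \<zeta> m + \<epsilon> * Hm" "?f \<pi> = transport_cost N \<xi> \<zeta> \<pi> + \<epsilon> * Hp"
        "?f \<pi>0 = transport_cost N \<xi> \<zeta> \<pi>0 + \<epsilon> * Hq" by blast+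
      have "?f m = transport_cost N \<xi> \<zeta> m + \<epsilon> * Hm" by (rule h(3))
      also have "\<dots> < transport_cost N \<xi> \<zeta> m + \<epsilon> * ((Hp + Hq) / 2)" using h(1) by (rule add_strict_left_mono)
      also have "\<dots> = (?f \<pi> + ?f \<pi>0) / 2" unfolding h(2) h(4) h(5) cm by (simp add: field_simps)
      finally show ?thesis .
    qed
    moreover have "?f \<pi> \<le> ?f m" "?f \<pi>0 \<le> ?f m" using that(2) \<pi>0(2) mC by auto
    ultimately show False by simp
  qed
  have ex1: "\<exists>!\<pi>. \<pi> \<in> ?C \<and> (\<forall>\<pi>'\<in>?C. ?f \<pi> \<le> ?f \<pi>')"
    using \<pi>0 uniq by blast
  show ?thesis unfolding sinkhorn_plan_def using theI'[OF ex1] by blast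
qed



lemma exp_lip:
  fixes a b r :: real
  assumes "0 \<le> a" "0 \<le> b" "0 \<le> r"
  shows "\<bar>exp (- a * r) - exp (- b * r)\<bar> \<le> \<bar>a - b\<bar> * r"
proof -
  have *: "exp (- a * r) - exp (- b * r) \<le> (b - a) * r \<and> 0 \<le> exp (- a * r) - exp (- b * r)"
    if "0 \<le> a" "a \<le> b" for a b :: real
  proof -
    have e: "exp (- b * r) = exp (- a * r) * exp (- ((b - a) * r))" unfolding mult_exp_exp by (simp add: algebra_simps)
    have "1 + (- ((b - a) * r)) \<le> exp (- ((b - a) * r))" by (rule exp_ge_add_one_self)
    then have "1 - exp (- ((b - a) * r)) \<le> (b - a) * r" by simp
    moreover have "exp (- a * r) \<le> 1" using that assms by simp
    moreover have "0 \<le> 1 - exp (- ((b - a) * r))" using that assms by simp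
    ultimately have "exp (- a * r) * (1 - exp (- ((b - a) * r))) \<le> 1 * ((b - a) * r)"
      by (intro mult_mono) (auto simp: that assms)
    moreover have "0 \<le> exp (- a * r) * (1 - exp (- ((b - a) * r)))"
      using \<open>0 \<le> 1 - exp (- ((b - a) * r))\<close> by simp
    ultimately show ?thesis unfolding e by (simp add: algebra_simps)
  qed
  show ?thesis
  proof (cases "a \<le> b")
    case True then show ?thesis using *[OF assms(1) True] by simp
  next
    case False then show ?thesis using *[OF assms(2), of a] by simp
  qed
qed

lemma Kemp_bounds:
  assumes "\<forall>k<N. 0 \<le> \<xi> k" "1 \<le> N"
  shows "0 \<le> Kemp N \<xi> x x'" "Kemp N \<xi> x x' \<le> 1"
proof -
  have "(\<Sum>k<N. exp (- \<xi> k * (norm (x - x'))^2)) \<le> (\<Sum>k<N. 1)"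
    using assms by (intro sum_mono) simp
  then show "Kemp N \<xi> x x' \<le> 1" using assms unfolding Kemp_def by simp
  show "0 \<le> Kemp N \<xi> x x'" unfolding Kemp_def by (simp add: sum_nonneg)
qed

lemma Kemp_lip:
  assumes "\<forall>k<N. 0 \<le> \<xi> k \<and> 0 \<le> z k \<and> \<bar>z k - \<xi> k\<bar> \<le> \<delta>" "1 \<le> N"
  shows "\<bar>Kemp N z x x' - Kemp N \<xi> x x'\<bar> \<le> \<delta> * (norm (x - x'))^2"
proof -
  let ?r = "(norm (x - x'))^2"
  have "\<bar>(\<Sum>k<N. exp (- z k * ?r)) - (\<Sum>k<N. exp (- \<xi> k * ?r))\<bar>
      = \<bar>\<Sum>k<N. exp (- z k * ?r) - exp (- \<xi> k * ?r)\<bar>" by (simp add: sum_subtractf)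
  also have "\<dots> \<le> (\<Sum>k<N. \<bar>exp (- z k * ?r) - exp (- \<xi> k * ?r)\<bar>)" by (rule sum_abs)
  also have "\<dots> \<le> (\<Sum>k<N. \<delta> * ?r)"
  proof (intro sum_mono)
    fix k assume k: "k \<in> {..<N}"
    have h1: "\<bar>exp (- z k * ?r) - exp (- \<xi> k * ?r)\<bar> \<le> \<bar>z k - \<xi> k\<bar> * ?r"
      using assms k by (intro exp_lip) auto
    have h2: "\<bar>z k - \<xi> k\<bar> \<le> \<delta>" using assms k by auto
    from h1 h2 show "\<bar>exp (- z k * ?r) - exp (- \<xi> k * ?r)\<bar> \<le> \<delta> * ?r"
      by (meson mult_right_mono order_trans zero_le_power2)
  qed
  also have "\<dots> = real N * (\<delta> * ?r)" by simp
  finally have "\<bar>(\<Sum>k<N. exp (- z k * ?r)) - (\<Sum>k<N. exp (- \<xi> k * ?r))\<bar> \<le> real N * (\<delta> * ?r)" .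
  moreover have "Kemp N z x x' - Kemp N \<xi> x x' =
      ((\<Sum>k<N. exp (- z k * ?r)) - (\<Sum>k<N. exp (- \<xi> k * ?r))) / real N"
    unfolding Kemp_def by (simp add: diff_divide_distrib)
  ultimately show ?thesis using assms(2) by (simp add: divide_le_eq abs_divide mult.commute)
qed

context
  fixes P :: "('a::euclidean_space \<times> real) measure" and B :: real
  assumes probP: "prob_space P" and setsP: "sets P = sets borel"
    and labels: "AE p in P. \<bar>snd p\<bar> \<le> 1"
    and bnd: "AE p in P. norm (fst p) \<le> B"
begin

abbreviation "M \<equiv> P \<Otimes>\<^sub>M P"

lemma pps: "pair_prob_space P P"
  using probP by (simp add: pair_prob_space_def pair_sigma_finite_def prob_space_imp_sigma_finite)

lemma probM: "prob_space M"
  using probP by (intro prob_space_pair)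

lemma setsM: "sets M = sets (borel :: (('a \<times> real) \<times> ('a \<times> real)) measure)"
proof -
  have "sets M = sets ((borel :: ('a \<times> real) measure) \<Otimes>\<^sub>M borel)"
    by (rule sets_pair_measure_cong[OF setsP setsP])
  then show ?thesis by (metis borel_prod)
qed

lemma measM: "continuous_on UNIV f \<Longrightarrow> f \<in> borel_measurable M"
  using measurable_cong_sets[OF setsM refl] borel_measurable_continuous_onI by blast

lemma AE_M: "AE pq in M. \<bar>snd (fst pq)\<bar> \<le> 1 \<and> \<bar>snd (snd pq)\<bar> \<le> 1
    \<and> (norm (fst (fst pq) - fst (snd pq)))^2 \<le> (2 * B)^2"
proof -
  define Q where "Q p = (\<bar>snd p\<bar> \<le> 1 \<and> norm (fst p) \<le> B)" for p :: "'a \<times> real"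
  have hQ: "AE p in P. Q p" using labels bnd unfolding Q_def by eventually_elim auto
  interpret pair_prob_space P P by (rule pps)
  have sp: "space M = UNIV" using setsM by (metis sets_eq_imp_space_eq space_borel)
  have "{x \<in> space M. Q (fst x) \<and> Q (snd x)} \<in> sets M"
  proof -
    have "closed {x :: ('a \<times> real) \<times> ('a \<times> real). Q (fst x) \<and> Q (snd x)}"
      unfolding Q_def
      by (intro closed_Collect_conj closed_Collect_le continuous_intros continuous_on_const)
    then show ?thesis using setsM sp by (simp add: borel_closed)
  qed
  moreover have "AE x in P. AE y in P. Q (fst (x, y)) \<and> Q (snd (x, y))"
    using hQ by (auto elim!: eventually_mono)
  ultimately have "AE x in M. Q (fst x) \<and> Q (snd x)" by (rule AE_pair_measure)
  then show ?thesis
  proof (rule AE_mp, intro AE_I2 impI)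
    fix pq :: "('a \<times> real) \<times> ('a \<times> real)"
    assume "Q (fst pq) \<and> Q (snd pq)"
    then have h: "\<bar>snd (fst pq)\<bar> \<le> 1" "\<bar>snd (snd pq)\<bar> \<le> 1"
      "norm (fst (fst pq)) \<le> B" "norm (fst (snd pq)) \<le> B" unfolding Q_def by auto
    have "norm (fst (fst pq) - fst (snd pq)) \<le> 2 * B"
      using norm_triangle_ineq4[of "fst (fst pq)" "fst (snd pq)"] h by simp
    then have "(norm (fst (fst pq) - fst (snd pq)))^2 \<le> (2 * B)^2"
      by (intro power_mono) auto
    then show "\<bar>snd (fst pq)\<bar> \<le> 1 \<and> \<bar>snd (snd pq)\<bar> \<le> 1
      \<and> (norm (fst (fst pq) - fst (snd pq)))^2 \<le> (2 * B)^2" using h by simp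
  qed
qed

definition FF :: "nat \<Rightarrow> (nat \<Rightarrow> real) \<Rightarrow> ('a \<times> real) \<times> ('a \<times> real) \<Rightarrow> real" where
  "FF N \<xi> pq = snd (fst pq) * snd (snd pq) * Kemp N \<xi> (fst (fst pq)) (fst (snd pq))"
definition GG :: "nat \<Rightarrow> (nat \<Rightarrow> real) \<Rightarrow> ('a \<times> real) \<times> ('a \<times> real) \<Rightarrow> real" where
  "GG N \<xi> pq = (Kemp N \<xi> (fst (fst pq)) (fst (snd pq)))^2"

lemma E0_eq: "E0 P N \<xi> = integral\<^sup>L M (FF N \<xi>)" unfolding E0_def FF_def by simp
lemma Eg_eq: "Egamma P N \<gamma> \<xi> = E0 P N \<xi> - (1 / \<gamma>) * integral\<^sup>L M (GG N \<xi>)"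
  unfolding Egamma_def GG_def by simp

lemma meas_FF: "1 \<le> N \<Longrightarrow> FF N \<xi> \<in> borel_measurable M"
  unfolding FF_def Kemp_def by (intro measM continuous_intros) auto
lemma meas_GG: "1 \<le> N \<Longrightarrow> GG N \<xi> \<in> borel_measurable M"
  unfolding GG_def Kemp_def by (intro measM continuous_intros) auto

lemma FF_bound: "\<forall>k<N. 0 \<le> \<xi> k \<Longrightarrow> 1 \<le> N \<Longrightarrow> AE pq in M. norm (FF N \<xi> pq) \<le> 1"
  using AE_M
proof (rule AE_mp, intro AE_I2 impI)
  fix pq :: "('a \<times> real) \<times> ('a \<times> real)"
  assume a: "\<forall>k<N. 0 \<le> \<xi> k" "1 \<le> N"
    and h: "\<bar>snd (fst pq)\<bar> \<le> 1 \<and> \<bar>snd (snd pq)\<bar> \<le> 1 \<and> (norm (fst (fst pq) - fst (snd pq)))^2 \<le> (2 * B)^2"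
  have k0: "0 \<le> Kemp N \<xi> (fst (fst pq)) (fst (snd pq))" "Kemp N \<xi> (fst (fst pq)) (fst (snd pq)) \<le> 1"
    using Kemp_bounds[OF a] by auto
  have k: "\<bar>Kemp N \<xi> (fst (fst pq)) (fst (snd pq))\<bar> \<le> 1" using k0 by auto
  have "\<bar>snd (fst pq) * snd (snd pq)\<bar> \<le> 1" using h by (simp add: abs_mult mult_le_one)
  then show "norm (FF N \<xi> pq) \<le> 1" unfolding FF_def using k
    by (simp add: abs_mult mult_le_one del: abs_mult_pos abs_mult_pos')
qed

lemma GG_bound: "\<forall>k<N. 0 \<le> \<xi> k \<Longrightarrow> 1 \<le> N \<Longrightarrow> 0 \<le> GG N \<xi> pq \<and> GG N \<xi> pq \<le> 1"
proof -
  assume a: "\<forall>k<N. 0 \<le> \<xi> k" "1 \<le> N"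
  have k0: "0 \<le> Kemp N \<xi> (fst (fst pq)) (fst (snd pq))" "Kemp N \<xi> (fst (fst pq)) (fst (snd pq)) \<le> 1"
    using Kemp_bounds[OF a] by auto
  then show ?thesis unfolding GG_def by (simp add: power_le_one)
qed

lemma int_FF: "\<forall>k<N. 0 \<le> \<xi> k \<Longrightarrow> 1 \<le> N \<Longrightarrow> integrable M (FF N \<xi>)"
proof -
  assume a: "\<forall>k<N. 0 \<le> \<xi> k" "1 \<le> N"
  interpret pm: prob_space M by (rule probM)
  have i1: "integrable M (\<lambda>x. 1::real)" by (rule pm.integrable_const)
  show ?thesis
  proof (rule Bochner_Integration.integrable_bound[OF i1])
    show "FF N \<xi> \<in> borel_measurable M" by (rule meas_FF[OF a(2)])
    show "AE x in M. norm (FF N \<xi> x) \<le> norm ((\<lambda>x. 1::real) x)" using FF_bound[OF a] by simp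
  qed
qed

lemma int_GG: "\<forall>k<N. 0 \<le> \<xi> k \<Longrightarrow> 1 \<le> N \<Longrightarrow> integrable M (GG N \<xi>)"
proof -
  assume a: "\<forall>k<N. 0 \<le> \<xi> k" "1 \<le> N"
  interpret pm: prob_space M by (rule probM)
  have i1: "integrable M (\<lambda>x. 1::real)" by (rule pm.integrable_const)
  show ?thesis
  proof (rule Bochner_Integration.integrable_bound[OF i1])
    show "GG N \<xi> \<in> borel_measurable M" by (rule meas_GG[OF a(2)])
    show "AE x in M. norm (GG N \<xi> x) \<le> norm ((\<lambda>x. 1::real) x)" using GG_bound[OF a] by (intro AE_I2) simp
  qed
qed

lemma int_one: "integrable M (\<lambda>x. 1::real)"
proof -
  interpret pm: prob_space M by (rule probM)
  show ?thesis by (rule pm.integrable_const)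
qed

lemma E0_bound: "\<forall>k<N. 0 \<le> \<xi> k \<Longrightarrow> 1 \<le> N \<Longrightarrow> \<bar>E0 P N \<xi>\<bar> \<le> 1"
proof -
  assume a: "\<forall>k<N. 0 \<le> \<xi> k" "1 \<le> N"
  have "\<bar>integral\<^sup>L M (FF N \<xi>)\<bar> \<le> (\<integral>x. norm (FF N \<xi> x) \<partial>M)"
    using integral_norm_bound[of M "FF N \<xi>"] by simp
  also have "\<dots> \<le> (\<integral>x. 1 \<partial>M)"
    using FF_bound[OF a] int_one by (intro integral_mono_AE') auto
  also have "\<dots> = 1" using prob_space.prob_space[OF probM] by simp
  finally show ?thesis unfolding E0_eq .
qed

lemma GG_int_bound: "\<forall>k<N. 0 \<le> \<xi> k \<Longrightarrow> 1 \<le> N \<Longrightarrow> 0 \<le> integral\<^sup>L M (GG N \<xi>) \<and> integral\<^sup>L M (GG N \<xi>) \<le> 1"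
proof -
  assume a: "\<forall>k<N. 0 \<le> \<xi> k" "1 \<le> N"
  have "integral\<^sup>L M (GG N \<xi>) \<le> (\<integral>x. 1 \<partial>M)"
    using GG_bound[OF a] int_one by (intro integral_mono_AE') auto
  also have "\<dots> = 1" using prob_space.prob_space[OF probM] by simp
  finally show ?thesis using GG_bound[OF a] by (simp add: integral_nonneg)
qed

lemma lip_bounds:
  assumes a: "\<forall>k<N. 0 \<le> \<xi> k \<and> 0 \<le> z k \<and> \<bar>z k - \<xi> k\<bar> \<le> \<delta>" "1 \<le> N" "0 \<le> \<delta>"
  shows "\<bar>E0 P N z - E0 P N \<xi>\<bar> \<le> \<delta> * (2 * B)^2"
    "\<bar>integral\<^sup>L M (GG N z) - integral\<^sup>L M (GG N \<xi>)\<bar> \<le> 2 * (\<delta> * (2 * B)^2)"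
proof -
  interpret pm: prob_space M by (rule probM)
  have az: "\<forall>k<N. 0 \<le> z k" and ax: "\<forall>k<N. 0 \<le> \<xi> k" using a by auto
  have lip: "\<bar>Kemp N z x x' - Kemp N \<xi> x x'\<bar> \<le> \<delta> * (norm (x - x'))^2" for x x' :: 'a
    by (rule Kemp_lip[OF a(1,2)])
  have "\<bar>E0 P N z - E0 P N \<xi>\<bar> = \<bar>integral\<^sup>L M (\<lambda>x. FF N z x - FF N \<xi> x)\<bar>"
    unfolding E0_eq using int_FF[OF az a(2)] int_FF[OF ax a(2)] by simp
  also have "\<dots> \<le> (\<integral>x. norm (FF N z x - FF N \<xi> x) \<partial>M)"
    using integral_norm_bound[of M "\<lambda>x. FF N z x - FF N \<xi> x"] by simp
  also have "\<dots> \<le> (\<integral>x. \<delta> * (2 * B)^2 \<partial>M)"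
  proof (intro integral_mono_AE')
    show "AE x in M. norm (FF N z x - FF N \<xi> x) \<le> \<delta> * (2 * B)^2"
      using AE_M
    proof (rule AE_mp, intro AE_I2 impI)
      fix pq :: "('a \<times> real) \<times> ('a \<times> real)"
      assume h: "\<bar>snd (fst pq)\<bar> \<le> 1 \<and> \<bar>snd (snd pq)\<bar> \<le> 1 \<and> (norm (fst (fst pq) - fst (snd pq)))^2 \<le> (2 * B)^2"
      have y: "\<bar>snd (fst pq) * snd (snd pq)\<bar> \<le> 1" using h by (simp add: abs_mult mult_le_one)
      have d: "\<bar>Kemp N z (fst (fst pq)) (fst (snd pq)) - Kemp N \<xi> (fst (fst pq)) (fst (snd pq))\<bar> \<le> \<delta> * (2 * B)^2"
        using lip[of "fst (fst pq)" "fst (snd pq)"] h a(3) by (meson mult_left_mono order_trans)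
      have "FF N z pq - FF N \<xi> pq = snd (fst pq) * snd (snd pq) *
          (Kemp N z (fst (fst pq)) (fst (snd pq)) - Kemp N \<xi> (fst (fst pq)) (fst (snd pq)))"
        unfolding FF_def by (simp add: algebra_simps)
      also have "\<bar>\<dots>\<bar> \<le> 1 * (\<delta> * (2 * B)^2)"
        unfolding abs_mult[of "snd (fst pq) * snd (snd pq)"]
        using y d by (intro mult_mono) auto
      finally show "norm (FF N z pq - FF N \<xi> pq) \<le> \<delta> * (2 * B)^2" by simp
    qed
  qed (use a(3) pm.integrable_const in auto)
  also have "\<dots> = \<delta> * (2 * B)^2" using prob_space.prob_space[OF probM] by simp
  finally show "\<bar>E0 P N z - E0 P N \<xi>\<bar> \<le> \<delta> * (2 * B)^2" .
  have "\<bar>integral\<^sup>L M (GG N z) - integral\<^sup>L M (GG N \<xi>)\<bar> = \<bar>integral\<^sup>L M (\<lambda>x. GG N z x - GG N \<xi> x)\<bar>"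
    using int_GG[OF az a(2)] int_GG[OF ax a(2)] by simp
  also have "\<dots> \<le> (\<integral>x. norm (GG N z x - GG N \<xi> x) \<partial>M)"
    using integral_norm_bound[of M "\<lambda>x. GG N z x - GG N \<xi> x"] by simp
  also have "\<dots> \<le> (\<integral>x. 2 * (\<delta> * (2 * B)^2) \<partial>M)"
  proof (intro integral_mono_AE')
    show "AE x in M. norm (GG N z x - GG N \<xi> x) \<le> 2 * (\<delta> * (2 * B)^2)"
      using AE_M
    proof (rule AE_mp, intro AE_I2 impI)
      fix pq :: "('a \<times> real) \<times> ('a \<times> real)"
      assume h: "\<bar>snd (fst pq)\<bar> \<le> 1 \<and> \<bar>snd (snd pq)\<bar> \<le> 1 \<and> (norm (fst (fst pq) - fst (snd pq)))^2 \<le> (2 * B)^2"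
      define kz where "kz = Kemp N z (fst (fst pq)) (fst (snd pq))"
      define kx where "kx = Kemp N \<xi> (fst (fst pq)) (fst (snd pq))"
      have bz: "0 \<le> kz" "kz \<le> 1" using Kemp_bounds[OF az a(2)] unfolding kz_def by auto
      have bx: "0 \<le> kx" "kx \<le> 1" using Kemp_bounds[OF ax a(2)] unfolding kx_def by auto
      have d: "\<bar>kz - kx\<bar> \<le> \<delta> * (2 * B)^2"
        using lip[of "fst (fst pq)" "fst (snd pq)"] h a(3) unfolding kz_def kx_def
        by (meson mult_left_mono order_trans)
      have "GG N z pq - GG N \<xi> pq = (kz + kx) * (kz - kx)"
        unfolding GG_def kz_def kx_def by (simp add: power2_eq_square algebra_simps)
      also have "\<bar>\<dots>\<bar> \<le> 2 * (\<delta> * (2 * B)^2)"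
        unfolding abs_mult using bz bx d by (intro mult_mono) auto
      finally show "norm (GG N z pq - GG N \<xi> pq) \<le> 2 * (\<delta> * (2 * B)^2)" by simp
    qed
  qed (use a(3) pm.integrable_const in auto)
  also have "\<dots> = 2 * (\<delta> * (2 * B)^2)" using prob_space.prob_space[OF probM] by simp
  finally show "\<bar>integral\<^sup>L M (GG N z) - integral\<^sup>L M (GG N \<xi>)\<bar> \<le> 2 * (\<delta> * (2 * B)^2)" .
qed

end



lemma W2_le_W2eps: "0 < \<epsilon> \<Longrightarrow> W2 N \<xi> \<zeta> \<le> W2eps N \<epsilon> \<xi> \<zeta>"
  unfolding W2eps_def using sinkhorn_plan_prop W2_le_cost by blast

lemma xlnx_ge: "0 \<le> x \<Longrightarrow> -1 \<le> x * ln (x::real)"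
  using h_tangent(1)[of x 1] by simp

lemma xlnx_le: "0 \<le> x \<Longrightarrow> x \<le> 1 \<Longrightarrow> x * ln (x::real) \<le> 0"
proof (cases "x = 0")
  case False
  assume "0 \<le> x" "x \<le> 1"
  then have "ln x \<le> 0" using False by simp
  then show ?thesis using \<open>0 \<le> x\<close> by (simp add: mult_nonneg_nonpos)
qed simp

lemma W2eps_bound:
  assumes "0 < \<epsilon>" "p permutes {..<N}" "1 \<le> N"
  shows "(W2eps N \<epsilon> z \<zeta>)^2 \<le> (\<Sum>i<N. (z i - \<zeta> (p i))^2) / real N + \<epsilon> * real N ^ 2"
proof -
  define \<pi> where "\<pi> = sinkhorn_plan N \<epsilon> z \<zeta>"
  have pC: "\<pi> \<in> couplings N" and opt: "sinkhorn_obj N \<epsilon> z \<zeta> \<pi> \<le> sinkhorn_obj N \<epsilon> z \<zeta> (pc N p)"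
    using sinkhorn_plan_prop[OF assms(1), of N z \<zeta>] pc_coupling[OF assms(2)] unfolding \<pi>_def by auto
  have H1: "(0 - real N ^ 2) \<le> (\<Sum>i<N. \<Sum>j<N. \<pi> i j * ln (\<pi> i j))"
  proof -
    have "(\<Sum>i<N. \<Sum>j<N. (-1::real)) \<le> (\<Sum>i<N. \<Sum>j<N. \<pi> i j * ln (\<pi> i j))"
      using pC by (intro sum_mono xlnx_ge) (auto simp: couplings_def)
    then show ?thesis by (simp add: power2_eq_square)
  qed
  have H2: "(\<Sum>i<N. \<Sum>j<N. pc N p i j * ln (pc N p i j)) \<le> 0"
    using assms(3) by (intro sum_nonpos xlnx_le) (auto simp: pc_def)
  have "transport_cost N z \<zeta> \<pi> \<le> transport_cost N z \<zeta> (pc N p) + \<epsilon> * real N ^ 2"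
  proof -
    have "transport_cost N z \<zeta> \<pi> + \<epsilon> * ((0 - real N ^ 2)) \<le> sinkhorn_obj N \<epsilon> z \<zeta> \<pi>"
      unfolding sinkhorn_obj_def using H1 assms(1) by (intro add_left_mono mult_left_mono) auto
    also have "\<dots> \<le> sinkhorn_obj N \<epsilon> z \<zeta> (pc N p)" by (rule opt)
    also have "\<dots> \<le> transport_cost N z \<zeta> (pc N p) + \<epsilon> * 0"
      unfolding sinkhorn_obj_def using H2 assms(1) by (intro add_left_mono mult_left_mono) auto
    finally show ?thesis by simp
  qed
  moreover have "(W2eps N \<epsilon> z \<zeta>)^2 = transport_cost N z \<zeta> \<pi>"
    unfolding W2eps_def \<pi>_def[symmetric] using cost_nonneg[OF pC] by simp
  ultimately show ?thesis using pc_cost[OF assms(2)] by simp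
qed

lemma sq_conv: "((1 - t) * a + t * b - c)^2 \<le> (1 - t) * (a - c)^2 + t * (b - (c::real))^2"
  if "0 \<le> t" "t \<le> 1"
proof -
  have "(1 - t) * (a - c)^2 + t * (b - c)^2 - ((1 - t) * a + t * b - c)^2 = t * (1 - t) * (a - b)^2"
    by (simp add: power2_eq_square algebra_simps)
  moreover have "0 \<le> t * (1 - t) * (a - b)^2" using that by simp
  ultimately show ?thesis by simp
qed

lemma clamp_le:
  assumes "xil \<le> s" "s \<le> xiu"
  shows "(max xil (min xiu x) - x)^2 \<le> (s - (x::real))^2"
proof (cases "x \<le> xil")
  case True
  then have "max xil (min xiu x) = xil" using assms by simp
  moreover have "0 \<le> xil - x" "xil - x \<le> s - x" using True assms by auto
  ultimately show ?thesis by (simp add: power_mono)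
next
  case False
  show ?thesis
  proof (cases "xiu \<le> x")
    case True
    then have "max xil (min xiu x) = xiu" using assms by simp
    moreover have "0 \<le> x - xiu" "x - xiu \<le> x - s" using True assms by auto
    then have "(x - xiu)^2 \<le> (x - s)^2" by (simp add: power_mono)
    ultimately show ?thesis by (simp add: power2_commute)
  next
    case False2: False
    then have "max xil (min xiu x) = x" using False by simp
    then show ?thesis by simp
  qed
qed

context
  fixes P :: "('a::euclidean_space \<times> real) measure" and B :: real
  assumes probP: "prob_space P" and setsP: "sets P = sets borel"
    and labels: "AE p in P. \<bar>snd p\<bar> \<le> 1"
    and bnd: "AE p in P. norm (fst p) \<le> B"
begin

lemma main_bound:
  fixes N :: nat and xil xiu R \<gamma> :: real and \<xi>0 :: "nat \<Rightarrow> real"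
  assumes N: "1 \<le> N" and A3: "0 < xil" "xil \<le> xiu" and \<gamma>: "0 < \<gamma>"
    and sl: "\<exists>\<xi>. (\<forall>k<N. \<xi> k \<in> {xil..xiu}) \<and> W2 N \<xi> \<xi>0 < R"
  shows "\<exists>c>0. \<forall>\<epsilon>>0. \<forall>\<xi>1 \<xi>2.
          is_argmax_on (Egamma P N \<gamma>) (PN N xil xiu R \<xi>0) \<xi>1
        \<longrightarrow> is_argmax_on (Egamma P N \<gamma>) (PNeps N \<epsilon> xil xiu R \<xi>0) \<xi>2
        \<longrightarrow> \<bar>E0 P N \<xi>1 - E0 P N \<xi>2\<bar> \<le> c * exp (- 2 / \<epsilon>) + 2 / \<gamma>"
proof (cases "\<exists>\<xi>a. is_argmax_on (Egamma P N \<gamma>) (PN N xil xiu R \<xi>0) \<xi>a")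
  case False
  then show ?thesis by (intro exI[of _ 1]) auto
next
  case True
  note E0b = E0_bound[OF probP setsP labels bnd]
  note Qb = GG_int_bound[OF probP setsP labels bnd]
  note lipb = lip_bounds[OF probP setsP labels bnd]
  note Egeq = Eg_eq[OF probP setsP labels bnd]
  let ?E = "Egamma P N \<gamma>"
  let ?Q = "\<lambda>\<xi>. integral\<^sup>L (P \<Otimes>\<^sub>M P) (GG N \<xi>)"
  obtain \<xi>a where \<xi>a: "is_argmax_on ?E (PN N xil xiu R \<xi>0) \<xi>a" using True by blast
  have \<xi>a_box: "\<forall>k<N. \<xi>a k \<in> {xil..xiu}" and \<xi>a_W: "W2 N \<xi>a \<xi>0 \<le> R"
    using \<xi>a by (auto simp: is_argmax_on_def PN_def)
  obtain p where p: "p permutes {..<N}" "(\<Sum>i<N. (\<xi>a i - \<xi>0 (p i))^2) / real N \<le> R^2"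
    using W2_perm[OF \<xi>a_W] by blast
  obtain \<xi>s where \<xi>s: "\<forall>k<N. \<xi>s k \<in> {xil..xiu}" "W2 N \<xi>s \<xi>0 < R" using sl by blast
  have Rpos: "0 < R"
  proof -
    have "0 \<le> W2 N \<xi>s \<xi>0" using Inf_nonneg[of N \<xi>s \<xi>0] unfolding W2_def by simp
    then show ?thesis using \<xi>s(2) by simp
  qed
  obtain \<pi>s where \<pi>s: "\<pi>s \<in> couplings N" "transport_cost N \<xi>s \<xi>0 \<pi>s < R^2" using W2_lt[OF \<xi>s(2)] by blast
  define cl where "cl x = max xil (min xiu x)" for x
  define g where "g \<xi> = (\<Sum>i<N. (\<xi> i - \<xi>0 (p i))^2) / real N" for \<xi>
  define q where "q i = cl (\<xi>0 (p i))" for i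
  have dsum: "(\<Sum>j<N. (cl (\<xi>0 j) - \<xi>0 j)^2) / real N < R^2"
  proof -
    have "(\<Sum>j<N. (cl (\<xi>0 j) - \<xi>0 j)^2) / real N = (\<Sum>i<N. \<Sum>j<N. \<pi>s i j * (cl (\<xi>0 j) - \<xi>0 j)^2)"
      using sum_pi_right[OF \<pi>s(1), of "\<lambda>j. (cl (\<xi>0 j) - \<xi>0 j)^2"] by simp
    also have "\<dots> \<le> transport_cost N \<xi>s \<xi>0 \<pi>s"
      unfolding transport_cost_def using \<pi>s(1) \<xi>s(1)
      by (intro sum_mono mult_left_mono) (auto simp: couplings_def cl_def intro!: clamp_le)
    finally show ?thesis using \<pi>s(2) by simp
  qed
  have gq: "g q < R^2"
  proof -
    have "(\<Sum>i<N. (q i - \<xi>0 (p i))^2) = (\<Sum>j<N. (cl (\<xi>0 j) - \<xi>0 j)^2)"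
      unfolding q_def using sum.reindex_bij_betw[OF permutes_imp_bij[OF p(1)], of "\<lambda>j. (cl (\<xi>0 j) - \<xi>0 j)^2"]
      by simp
    then show ?thesis using dsum unfolding g_def by simp
  qed
  have q_box: "\<forall>k<N. q k \<in> {xil..xiu}" using A3 by (auto simp: q_def cl_def)
  define L where "L = (2 * B)^2 * (1 + 2 / \<gamma>)"
  have L0: "0 \<le> L" using \<gamma> by (simp add: L_def)
  define t where "t = 1 / (1 + \<gamma> * (xiu - xil) * L)"
  have K0: "0 \<le> \<gamma> * (xiu - xil) * L" using \<gamma> A3 L0 by simp
  have t0: "0 < t" and t1: "t \<le> 1" using K0 by (auto simp: t_def)
  have tK: "t * ((xiu - xil) * L) \<le> 1 / \<gamma>"
  proof -
    have "t * (1 + \<gamma> * (xiu - xil) * L) = 1" using K0 by (simp add: t_def)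
    then have "t * (\<gamma> * (xiu - xil) * L) \<le> 1" using t0 by (simp add: algebra_simps)
    then show ?thesis using \<gamma> by (simp add: field_simps)
  qed
  define \<delta> where "\<delta> = t * (xiu - xil)"
  have \<delta>0: "0 \<le> \<delta>" using t0 A3 by (simp add: \<delta>_def)
  define z where "z k = (1 - t) * \<xi>a k + t * q k" for k
  have z_box: "\<forall>k<N. z k \<in> {xil..xiu}"
  proof (intro allI impI)
    fix k assume "k < N"
    then have "xil \<le> \<xi>a k" "\<xi>a k \<le> xiu" "xil \<le> q k" "q k \<le> xiu" using \<xi>a_box q_box by auto
    then have "(1 - t) * xil + t * xil \<le> z k" "z k \<le> (1 - t) * xiu + t * xiu"
      unfolding z_def using t0 t1 by (auto intro!: add_mono mult_left_mono)
    then show "z k \<in> {xil..xiu}" by (simp add: algebra_simps)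
  qed
  have zd: "\<forall>k<N. 0 \<le> \<xi>a k \<and> 0 \<le> z k \<and> \<bar>z k - \<xi>a k\<bar> \<le> \<delta>"
  proof (intro allI impI conjI)
    fix k assume k: "k < N"
    show "0 \<le> \<xi>a k" "0 \<le> z k" using k \<xi>a_box z_box A3 by (auto intro: order_trans[of 0 xil])
    have "z k - \<xi>a k = t * (q k - \<xi>a k)" by (simp add: z_def algebra_simps)
    moreover have "\<bar>q k - \<xi>a k\<bar> \<le> xiu - xil"
    proof -
      have "xil \<le> q k" "q k \<le> xiu" "xil \<le> \<xi>a k" "\<xi>a k \<le> xiu" using k \<xi>a_box q_box by auto
      then show ?thesis by arith
    qed
    ultimately show "\<bar>z k - \<xi>a k\<bar> \<le> \<delta>" using t0 unfolding \<delta>_def by (simp add: abs_mult mult_left_mono)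
  qed
  have gz: "g z < R^2"
  proof -
    have "g z \<le> (\<Sum>i<N. (1 - t) * (\<xi>a i - \<xi>0 (p i))^2 + t * (q i - \<xi>0 (p i))^2) / real N"
      unfolding g_def z_def using t0 t1 by (intro divide_right_mono sum_mono sq_conv) auto
    also have "\<dots> = (1 - t) * g \<xi>a + t * g q"
      unfolding g_def by (simp add: sum.distrib sum_distrib_left add_divide_distrib)
    also have "\<dots> < (1 - t) * R^2 + t * R^2"
      using p(2) gq t0 t1 unfolding g_def[symmetric] by (intro add_le_less_mono mult_left_mono mult_strict_left_mono) auto
    finally show ?thesis by (simp add: algebra_simps)
  qed
  have Ez: "?E \<xi>a - 1 / \<gamma> \<le> ?E z"
  proof -
    have ax: "\<forall>k<N. 0 \<le> \<xi>a k" using zd by auto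
    have l1: "\<bar>E0 P N z - E0 P N \<xi>a\<bar> \<le> \<delta> * (2 * B)^2" using lipb(1)[OF zd N \<delta>0] .
    have l2: "\<bar>?Q z - ?Q \<xi>a\<bar> \<le> 2 * (\<delta> * (2 * B)^2)" using lipb(2)[OF zd N \<delta>0] .
    have A: "E0 P N \<xi>a - E0 P N z \<le> \<delta> * (2 * B)^2" using l1 by arith
    have Q1: "?Q z - ?Q \<xi>a \<le> 2 * (\<delta> * (2 * B)^2)" using l2 by arith
    have Bq: "(1 / \<gamma>) * (?Q z - ?Q \<xi>a) \<le> (1 / \<gamma>) * (2 * (\<delta> * (2 * B)^2))"
      using Q1 \<gamma> by (intro mult_left_mono) auto
    have eq: "?E \<xi>a - ?E z = (E0 P N \<xi>a - E0 P N z) + (1 / \<gamma>) * (?Q z - ?Q \<xi>a)"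
      unfolding Egeq by (simp add: algebra_simps)
    have "?E \<xi>a - ?E z \<le> \<delta> * (2 * B)^2 + (1 / \<gamma>) * (2 * (\<delta> * (2 * B)^2))"
      unfolding eq using A Bq by (rule add_mono)
    also have "\<dots> = t * ((xiu - xil) * L)" unfolding \<delta>_def L_def using \<gamma> by (simp add: field_simps)
    also have "\<dots> \<le> 1 / \<gamma>" by (rule tK)
    finally show ?thesis by simp
  qed
  define \<epsilon>0 where "\<epsilon>0 = (R^2 - g z) / (real N ^ 2 + 1)"
  have Np: "0 < real N ^ 2 + 1" by (rule add_nonneg_pos[OF zero_le_power2 zero_less_one])
  have e0: "0 < \<epsilon>0" unfolding \<epsilon>0_def using gz Np by (intro divide_pos_pos) auto
  have zin: "z \<in> PNeps N \<epsilon> xil xiu R \<xi>0" if "0 < \<epsilon>" "\<epsilon> < \<epsilon>0" for \<epsilon>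
  proof -
    have "(W2eps N \<epsilon> z \<xi>0)^2 \<le> g z + \<epsilon> * real N ^ 2"
      using W2eps_bound[OF that(1) p(1) N] unfolding g_def by simp
    also have "\<dots> < R^2"
    proof -
      have "\<epsilon> * real N ^ 2 \<le> \<epsilon> * (real N ^ 2 + 1)" using that by simp
      also have "\<dots> < \<epsilon>0 * (real N ^ 2 + 1)" using that Np by (intro mult_strict_right_mono) auto
      also have "\<dots> = R^2 - g z" unfolding \<epsilon>0_def using Np by simp
      finally show ?thesis by simp
    qed
    finally have "(W2eps N \<epsilon> z \<xi>0)^2 < R^2" .
    then have "W2eps N \<epsilon> z \<xi>0 < R" using Rpos by (simp add: power_less_imp_less_base)
    then show ?thesis using z_box by (simp add: PNeps_def)
  qed
  define c where "c = 2 * exp (2 / \<epsilon>0)"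
  show ?thesis
  proof (intro exI[of _ c] conjI allI impI)
    show "0 < c" by (simp add: c_def)
    fix \<epsilon> :: real and \<xi>1 \<xi>2
    assume \<epsilon>: "0 < \<epsilon>" and a1: "is_argmax_on ?E (PN N xil xiu R \<xi>0) \<xi>1"
      and a2: "is_argmax_on ?E (PNeps N \<epsilon> xil xiu R \<xi>0) \<xi>2"
    have b1: "\<forall>k<N. 0 \<le> \<xi>1 k" using a1 A3 by (auto simp: is_argmax_on_def PN_def intro: order_trans[of 0 xil])
    have b2: "\<forall>k<N. 0 \<le> \<xi>2 k" using a2 A3 by (auto simp: is_argmax_on_def PNeps_def intro: order_trans[of 0 xil])
    have \<xi>2PN: "\<xi>2 \<in> PN N xil xiu R \<xi>0"
      using a2 W2_le_W2eps[OF \<epsilon>, of N \<xi>2 \<xi>0] by (auto simp: is_argmax_on_def PN_def PNeps_def)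
    have E21: "?E \<xi>2 \<le> ?E \<xi>1" using a1 \<xi>2PN by (auto simp: is_argmax_on_def)
    have E1a: "?E \<xi>1 = ?E \<xi>a" using a1 \<xi>a by (auto simp: is_argmax_on_def intro: order_antisym)
    have Q1: "0 \<le> ?Q \<xi>1" "?Q \<xi>1 \<le> 1" using Qb[OF b1 N] by auto
    have q1: "0 \<le> (1 / \<gamma>) * ?Q \<xi>1" "(1 / \<gamma>) * ?Q \<xi>1 \<le> 1 / \<gamma>"
      using mult_left_mono[OF Q1(2), of "1 / \<gamma>"] Q1(1) \<gamma> by auto
    have Q2: "0 \<le> ?Q \<xi>2" "?Q \<xi>2 \<le> 1" using Qb[OF b2 N] by auto
    have q2: "0 \<le> (1 / \<gamma>) * ?Q \<xi>2" "(1 / \<gamma>) * ?Q \<xi>2 \<le> 1 / \<gamma>"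
      using mult_left_mono[OF Q2(2), of "1 / \<gamma>"] Q2(1) \<gamma> by auto
    have low: "E0 P N \<xi>2 - E0 P N \<xi>1 \<le> 1 / \<gamma>"
      using E21 q1 q2 unfolding Egeq by simp
    show "\<bar>E0 P N \<xi>1 - E0 P N \<xi>2\<bar> \<le> c * exp (- 2 / \<epsilon>) + 2 / \<gamma>"
    proof (cases "\<epsilon> < \<epsilon>0")
      case True
      have "?E z \<le> ?E \<xi>2" using a2 zin[OF \<epsilon> True] by (auto simp: is_argmax_on_def)
      then have "?E \<xi>1 \<le> ?E \<xi>2 + 1 / \<gamma>" using Ez E1a by simp
      then have "E0 P N \<xi>1 - E0 P N \<xi>2 \<le> 2 / \<gamma>" using q1 q2 unfolding Egeq by simp
      moreover have "0 \<le> c * exp (- 2 / \<epsilon>)" by (simp add: c_def)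
      ultimately show ?thesis using low \<gamma> by (simp add: abs_le_iff)
    next
      case False
      have "\<bar>E0 P N \<xi>1 - E0 P N \<xi>2\<bar> \<le> 2" using E0b[OF b1 N] E0b[OF b2 N] by simp
      also have "2 = c * exp (- 2 / \<epsilon>0)"
      proof -
        have z0: "- 2 / \<epsilon>0 + 2 / \<epsilon>0 = 0" by simp
        have ee: "exp (- 2 / \<epsilon>0) * exp (2 / \<epsilon>0) = 1" by (simp only: mult_exp_exp z0 exp_zero)
        show ?thesis unfolding c_def using ee by (metis mult.assoc mult.commute mult.right_neutral)
      qed
      also have "\<dots> \<le> c * exp (- 2 / \<epsilon>)"
      proof -
        have "2 / \<epsilon> \<le> 2 / \<epsilon>0" using False e0 \<epsilon> by (intro divide_left_mono) auto
        then have "- 2 / \<epsilon>0 \<le> - 2 / \<epsilon>" by simp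
        then have "exp (- 2 / \<epsilon>0) \<le> exp (- 2 / \<epsilon>)" by simp
        then show ?thesis by (intro mult_left_mono) (auto simp: c_def)
      qed
      finally have X: "\<bar>E0 P N \<xi>1 - E0 P N \<xi>2\<bar> \<le> c * exp (- 2 / \<epsilon>)" .
      have "0 \<le> 2 / \<gamma>" using \<gamma> by simp
      then show ?thesis using X by (rule add_increasing2)
    qed
  qed
qed

end


theorem lemmaA4:
  fixes P :: "('a::euclidean_space \<times> real) measure"
    and \<mu>0 :: "real measure"
    and N :: nat and xil xiu R \<gamma> :: real
  assumes probP: "prob_space P"
    and setsP: "sets P = sets borel"
    and labels: "AE p in P. snd p \<in> {-1, 1}"
    and A1: "\<exists>X. bounded X \<and> (AE p in P. fst p \<in> X)"
    and A3: "0 < xil" "xil \<le> xiu"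
    and A4: "prob_space \<mu>0" "sets \<mu>0 = sets borel" "absolutely_continuous lborel \<mu>0"
    and N: "1 \<le> N"
    and \<gamma>: "0 < \<gamma>"
  shows "AE \<xi>0 in PiM {..<N} (\<lambda>_. \<mu>0).
    ((\<exists>\<xi>. (\<forall>k<N. \<xi> k \<in> {xil..xiu}) \<and> W2 N \<xi> \<xi>0 < R) \<and>
     (\<forall>\<epsilon>>0. \<exists>\<xi>. (\<forall>k<N. \<xi> k \<in> {xil..xiu}) \<and> W2eps N \<epsilon> \<xi> \<xi>0 < R))
    \<longrightarrow> (\<exists>c>0. \<forall>\<epsilon>>0. \<forall>\<xi>1 \<xi>2.
          is_argmax_on (Egamma P N \<gamma>) (PN N xil xiu R \<xi>0) \<xi>1
        \<longrightarrow> is_argmax_on (Egamma P N \<gamma>) (PNeps N \<epsilon> xil xiu R \<xi>0) \<xi>2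
        \<longrightarrow> \<bar>E0 P N \<xi>1 - E0 P N \<xi>2\<bar> \<le> c * exp (- 2 / \<epsilon>) + 2 / \<gamma>)"
proof -
  obtain X where X: "bounded X" "AE p in P. fst p \<in> X" using A1 by blast
  obtain B where B: "\<forall>x\<in>X. norm x \<le> B" using X(1) unfolding bounded_iff by blast
  have bnd: "AE p in P. norm (fst p) \<le> B" using X(2) by (rule eventually_mono) (use B in blast)
  have lab: "AE p in P. \<bar>snd p\<bar> \<le> 1" using labels by (rule eventually_mono) auto
  show ?thesis
  proof (rule AE_I2, rule impI)
    fix \<xi>0 :: "nat \<Rightarrow> real"
    assume h: "(\<exists>\<xi>. (\<forall>k<N. \<xi> k \<in> {xil..xiu}) \<and> W2 N \<xi> \<xi>0 < R) \<and>
     (\<forall>\<epsilon>>0. \<exists>\<xi>. (\<forall>k<N. \<xi> k \<in> {xil..xiu}) \<and> W2eps N \<epsilon> \<xi> \<xi>0 < R)"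
    show "\<exists>c>0. \<forall>\<epsilon>>0. \<forall>\<xi>1 \<xi>2.
          is_argmax_on (Egamma P N \<gamma>) (PN N xil xiu R \<xi>0) \<xi>1
        \<longrightarrow> is_argmax_on (Egamma P N \<gamma>) (PNeps N \<epsilon> xil xiu R \<xi>0) \<xi>2
        \<longrightarrow> \<bar>E0 P N \<xi>1 - E0 P N \<xi>2\<bar> \<le> c * exp (- 2 / \<epsilon>) + 2 / \<gamma>"
      by (rule main_bound[OF probP setsP lab bnd N A3(1) A3(2) \<gamma>]) (use h in blast)
  qed
qed

end
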